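(* Let $\langle A;\cdot\rangle$ be a semigroup satisfying condition $( * )$. Then $\langle A;\cdot\rangle$ is an Abelian algebra if and only if $\langle A;\cdot\rangle$ is an inflation of a subsemigroup which is a rectangular band of commutative groups, and the product of any two idempotents of $A$ is an idempotent.
   Context: $A\cdot A=\{xy\mid x,y\in A\}$; an idempotent is $e$ with $ee=e$. Condition $( * )$: either ($bcA=bA$ and $Abc=Ac$ for all $b,c\in A$), or the set $A\cdot A$ is finite. A semigroup $\langle T;\cdot\rangle$ is a rectangular band of semigroups $T_{i\lambda}$ if $\{T_{i\lambda}\mid i\in I,\lambda\in\Lambda\}$ is a partition of $T$ into subsemigroups with $T_{i\lambda}\cdot T_{j\mu}\subseteq T_{i\mu}$ for all $i,j\in I$, $\lambda,\mu\in\Lambda$; it is a rectangular band of commutative groups if each $\langle T_{i\lambda};\cdot\rangle$ is a commutative group. A semigroup $\langle A;\cdot\rangle$ is an inflation of a subsemigroup $\langle B;\cdot\rangle$ if there is a partition $\{X_b\mid b\in B\}$ of $A$ with $b\in X_b$ and $x\cdot y=a\cdot b$ for all $a,b\in B$, $x\in X_a$, $y\in X_b$. A polynomial operation of an algebra is an operation obtained from a term by substituting elements of the algebra for some of its variables. An algebra is called Abelian if for every polynomial operation $t(x,y_1,\ldots,y_n)$ and all elements $u,v,c_1,\ldots,c_n,d_1,\ldots,d_n$ of the algebra, $t(u,c_1,\ldots,c_n)=t(u,d_1,\ldots,d_n)$ implies $t(v,c_1,\ldots,c_n)=t(v,d_1,\ldots,d_n)$. *)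

theory Defs
  imports Main
begin

text \<open>The semigroup A is the whole carrier type 'a :: semigroup_mult.\<close>

definition cond_star :: "'a::semigroup_mult itself \<Rightarrow> bool" where
  "cond_star _ \<longleftrightarrow>
     (\<forall>b c::'a. {b * c * x | x. True} = {b * x | x. True}
                \<and> {x * b * c | x. True} = {x * c | x. True})
     \<or> finite {x * y | x y :: 'a. True}"

text \<open>Terms of the semigroup signature with constants from the semigroup
  (i.e. polynomials). Variable 0 plays the role of x, variables 1,2,... the y_i.\<close>
datatype 'a sterm = SVar nat | SConst 'a | SMul "'a sterm" "'a sterm"

primrec seval :: "(nat \<Rightarrow> 'a::semigroup_mult) \<Rightarrow> 'a sterm \<Rightarrow> 'a" where
  "seval \<rho> (SVar n) = \<rho> n"
| "seval \<rho> (SConst a) = a"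
| "seval \<rho> (SMul s t) = seval \<rho> s * seval \<rho> t"

definition abelian_semigroup :: "'a::semigroup_mult itself \<Rightarrow> bool" where
  "abelian_semigroup _ \<longleftrightarrow>
     (\<forall>(t::'a sterm) (u::'a) v c d.
        seval (c(0 := u)) t = seval (d(0 := u)) t \<longrightarrow>
        seval (c(0 := v)) t = seval (d(0 := v)) t)"

definition subsemigroup :: "'a::semigroup_mult set \<Rightarrow> bool" where
  "subsemigroup B \<longleftrightarrow> (\<forall>x\<in>B. \<forall>y\<in>B. x * y \<in> B)"

definition comm_group_on :: "'a::semigroup_mult set \<Rightarrow> bool" where
  "comm_group_on G \<longleftrightarrow> subsemigroup G \<and> (\<forall>x\<in>G. \<forall>y\<in>G. x * y = y * x) \<and>
     (\<exists>e\<in>G. \<forall>x\<in>G. e * x = x \<and> x * e = x \<and> (\<exists>y\<in>G. x * y = e \<and> y * x = e))"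

text \<open>B is a rectangular band of commutative groups T i l (i \<in> I, l \<in> L).
  The index sets are taken inside the carrier type (no loss: blocks are
  nonempty subsets of B, so |I|,|L| \<le> |B|).\<close>
definition rect_band_comm_groups :: "'a::semigroup_mult set \<Rightarrow> bool" where
  "rect_band_comm_groups B \<longleftrightarrow>
     (\<exists>(I::'a set) (L::'a set) (T :: 'a \<Rightarrow> 'a \<Rightarrow> 'a set).
        (\<forall>i\<in>I. \<forall>l\<in>L. T i l \<noteq> {} \<and> subsemigroup (T i l) \<and> comm_group_on (T i l)) \<and>
        (\<forall>i\<in>I. \<forall>l\<in>L. \<forall>j\<in>I. \<forall>m\<in>L. T i l = T j m \<or> T i l \<inter> T j m = {}) \<and>
        (\<Union>i\<in>I. \<Union>l\<in>L. T i l) = B \<and>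
        (\<forall>i\<in>I. \<forall>l\<in>L. \<forall>j\<in>I. \<forall>m\<in>L. \<forall>x\<in>T i l. \<forall>y\<in>T j m. x * y \<in> T i m))"

definition inflation_of :: "'a::semigroup_mult set \<Rightarrow> bool" where
  "inflation_of B \<longleftrightarrow> subsemigroup B \<and>
     (\<exists>X :: 'a \<Rightarrow> 'a set.
        (\<forall>b\<in>B. b \<in> X b) \<and>
        (\<forall>x::'a. \<exists>!b. b \<in> B \<and> x \<in> X b) \<and>
        (\<forall>a\<in>B. \<forall>b\<in>B. \<forall>x\<in>X a. \<forall>y\<in>X b. x * y = a * b))"

end

theory Submission
  imports Defs
begin

fun pw :: "'a::semigroup_mult \<Rightarrow> nat \<Rightarrow> 'a" where
  "pw x 0 = x"
| "pw x (Suc n) = x * pw x n"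

lemma pw_add: "pw x (Suc (m + n)) = pw x m * pw x n"
  by (induction m) (auto simp: mult.assoc)

definition Hc :: "'a::semigroup_mult \<Rightarrow> 'a set" where
  "Hc k = {s. k*s = s \<and> s*k = s \<and> (\<exists>t. k*t = t \<and> t*k = t \<and> s*t = k \<and> t*s = k)}"

lemma Hc_self: "k*k = k \<Longrightarrow> k \<in> Hc k"
  unfolding Hc_def by auto

lemma Hc_unique:
  assumes "s \<in> Hc k" "s \<in> Hc k'" shows "k = k'"
proof -
  from assms obtain t t' where h: "k*s = s" "s*k = s" "s*t = k" "t*s = k"
    "k'*s = s" "s*k' = s" "s*t' = k'" "t'*s = k'" unfolding Hc_def by blast
  have "k*k' = k" by (metis h(4) h(6) mult.assoc)
  moreover have "k*k' = k'" by (metis h(1) h(7) mult.assoc)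
  ultimately show ?thesis by simp
qed

lemma Hc_group:
  fixes s :: "'a::semigroup_mult"
  assumes a1: "s = s*s*x" and a2: "s = y*s*s"
  shows "\<exists>k. k*k = k \<and> s \<in> Hc k"
proof -
  define e where "e = y*s"
  have e2: "e = s*x" unfolding e_def by (metis a1 a2 mult.assoc)
  have es: "e*s = s" unfolding e_def using a2 by (simp add: mult.assoc)
  have se: "s*e = s" unfolding e2 using a1 by (simp add: mult.assoc)
  have ee: "e*e = e" by (metis e2 es mult.assoc)
  define t where "t = e*x*e"
  have st: "s*t = e" unfolding t_def by (metis e2 ee se mult.assoc)
  have et: "e*t = t" unfolding t_def by (metis ee mult.assoc)
  have te: "t*e = t" unfolding t_def by (metis ee mult.assoc)
  define l where "l = e*y*e"
  have ls: "l*s = e" unfolding l_def by (metis e_def ee es mult.assoc)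
  have le: "l*e = l" unfolding l_def by (metis ee mult.assoc)
  have "l = t" by (metis le st ls et mult.assoc)
  then have ts: "t*s = e" using ls by simp
  show ?thesis unfolding Hc_def using ee es se st et te ts by blast
qed

lemma Hc_closed:
  fixes x y k1 k2 :: "'a::semigroup_mult"
  assumes L: "\<And>e v y::'a. e*e = e \<Longrightarrow> v*(e*y) = v*y"
    and i1: "k1*k1 = k1" and i2: "k2*k2 = k2"
    and x: "x \<in> Hc k1" and y: "y \<in> Hc k2"
  shows "x*y \<in> Hc (k1*k2)"
proof -
  from x obtain t1 where h1: "k1*x = x" "x*k1 = x" "k1*t1 = t1" "t1*k1 = t1" "x*t1 = k1" "t1*x = k1"
    unfolding Hc_def by blast
  from y obtain t2 where h2: "k2*y = y" "y*k2 = y" "k2*t2 = t2" "t2*k2 = t2" "y*t2 = k2" "t2*y = k2"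
    unfolding Hc_def by blast
  define k where "k = k1*k2"
  have kk: "k*k = k" unfolding k_def by (simp add: mult.assoc L[OF i1] i2)
  have 1: "k*(x*y) = x*y" unfolding k_def
    by (simp add: mult.assoc L[OF i2]) (simp add: mult.assoc[symmetric] h1(1))
  have 2: "(x*y)*k = x*y"
  proof -
    have "(x*y)*k = x*((y*k2)*(k1*k2))" unfolding k_def using h2(2) by (simp add: mult.assoc)
    also have "\<dots> = x*(y*(k2*(k1*k2)))" by (simp add: mult.assoc)
    also have "\<dots> = x*(y*k2)" using L[OF i1] i2 by simp
    finally show ?thesis using h2(2) by simp
  qed
  define t where "t = k*(t2*(t1*k))"
  have 3: "k*t = t" unfolding t_def using kk by (simp add: mult.assoc[symmetric])
  have 4: "t*k = t" unfolding t_def using kk by (simp add: mult.assoc)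
  have 5: "(x*y)*t = k"
  proof -
    have "(x*y)*t = x*(y*(k1*(k2*(t2*(t1*k)))))" unfolding t_def k_def by (simp add: mult.assoc)
    also have "\<dots> = x*(y*(k2*(t2*(t1*k))))" using L[OF i1] by simp
    also have "\<dots> = x*(y*(t2*(t1*k)))" using L[OF i2] by simp
    also have "\<dots> = x*(k2*(t1*k))" using h2(5) by (simp add: mult.assoc[symmetric])
    also have "\<dots> = x*(t1*k)" using L[OF i2] by simp
    also have "\<dots> = k1*k" using h1(5) by (simp add: mult.assoc[symmetric])
    also have "\<dots> = k" unfolding k_def using i1 by (simp add: mult.assoc[symmetric])
    finally show ?thesis .
  qed
  have 6: "t*(x*y) = k"
  proof -
    have "t*(x*y) = k1*(k2*(t2*(t1*(k1*(k2*(x*y))))))" unfolding t_def k_def by (simp add: mult.assoc)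
    also have "\<dots> = k1*(k2*(t2*(t1*(k1*(x*y)))))" using L[OF i2] by simp
    also have "\<dots> = k1*(k2*(t2*(t1*(x*y))))" using L[OF i1] by simp
    also have "\<dots> = k1*(k2*(t2*(k1*y)))" using h1(6) by (simp add: mult.assoc[symmetric])
    also have "\<dots> = k1*(k2*(t2*y))" using L[OF i1] by simp
    also have "\<dots> = k1*(k2*k2)" using h2(6) by simp
    also have "\<dots> = k" unfolding k_def using i2 by simp
    finally show ?thesis .
  qed
  show ?thesis unfolding Hc_def k_def[symmetric] using 1 2 3 4 5 6 by blast
qed

section \<open>Forward direction\<close>

lemma ab_T1:
  fixes u c d v :: "'a::semigroup_mult"
  assumes ab: "abelian_semigroup TYPE('a)" and h: "u*c = u*d"
  shows "v*c = v*d"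
proof -
  have "seval ((\<lambda>_. c)(0:=u)) (SMul (SVar 0) (SVar (Suc 0))) =
        seval ((\<lambda>_. d)(0:=u)) (SMul (SVar 0) (SVar (Suc 0)))" using h by simp
  then have "seval ((\<lambda>_. c)(0:=v)) (SMul (SVar 0) (SVar (Suc 0))) =
        seval ((\<lambda>_. d)(0:=v)) (SMul (SVar 0) (SVar (Suc 0)))"
    using ab unfolding abelian_semigroup_def by blast
  then show ?thesis by simp
qed

lemma ab_L:
  fixes e v y :: "'a::semigroup_mult"
  assumes ab: "abelian_semigroup TYPE('a)" and ee: "e*e = e"
  shows "v*(e*y) = v*y"
  by (rule ab_T1[OF ab, of e]) (simp add: mult.assoc[symmetric] ee)

lemma ab_comm:
  fixes g h k :: "'a::semigroup_mult"
  assumes ab: "abelian_semigroup TYPE('a)"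
    and "g*k = g" "k*g = g" "h*k = h" "k*h = h"
  shows "g*h = h*g"
proof -
  let ?t = "SMul (SMul (SVar (Suc 0)) (SVar 0)) (SVar 2) :: 'a sterm"
  let ?c = "\<lambda>n::nat. if n = 1 then g else k"
  let ?d = "\<lambda>n::nat. if n = 1 then k else g"
  have "seval (?c(0:=k)) ?t = seval (?d(0:=k)) ?t" using assms by (simp add: mult.assoc)
  then have "seval (?c(0:=h)) ?t = seval (?d(0:=h)) ?t"
    using ab unfolding abelian_semigroup_def by blast
  then show ?thesis using assms by (simp add: mult.assoc)
qed

lemma cs_F1:
  fixes s :: "'a::semigroup_mult"
  assumes ab: "abelian_semigroup TYPE('a)" and cs: "cond_star TYPE('a)"
    and sS: "s \<in> {x*y | x y :: 'a. True}"
  shows "\<exists>x y. s = s*s*x \<and> s = y*s*s"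
proof -
  from sS obtain a b where sab: "s = a*b" by blast
  show ?thesis
  proof (cases "\<forall>b c::'a. {b * c * x | x. True} = {b * x | x. True}
                \<and> {x * b * c | x. True} = {x * c | x. True}")
    case True
    have "a*b \<in> {a * x | x. True}" by blast
    then have "a*b \<in> {a*b*x | x. True}" using True by blast
    then obtain x1 where x1: "s = s*x1" using sab by blast
    have "s*x1 \<in> {s*x | x. True}" by blast
    then have "s*x1 \<in> {s*s*x | x. True}" using True by blast
    then obtain x where x: "s = s*s*x" using x1 by auto
    have "a*b \<in> {x * b | x. True}" by blast
    then have "a*b \<in> {x*a*b | x. True}" using True by blast
    then obtain y1 where y1: "s = y1*s" using sab by (auto simp: mult.assoc)
    have "y1*s \<in> {x*s | x. True}" by blast
    then have "y1*s \<in> {x*s*s | x. True}" using True by blast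
    then obtain y where y: "s = y*s*s" using y1 by auto
    show ?thesis using x y by blast
  next
    case False
    then have fin: "finite {x * y | x y :: 'a. True}" using cs unfolding cond_star_def by blast
    have "range (pw s) \<subseteq> {x * y | x y :: 'a. True}"
    proof
      fix z assume "z \<in> range (pw s)"
      then obtain n where "z = pw s n" by blast
      then show "z \<in> {x * y | x y :: 'a. True}" using sS by (cases n) auto
    qed
    then have "finite (range (pw s))" using fin finite_subset by blast
    then have "\<not> inj (pw s)" using finite_imageD by blast
    then obtain i j where ij: "i \<noteq> j" "pw s i = pw s j" unfolding inj_def by blast
    have "\<exists>i p. pw s i = pw s (i + Suc p)"
    proof (cases "i < j")
      case True then show ?thesis using ij by (metis add_Suc_right less_imp_Suc_add)
    next
      case False then have "j < i" using ij by simp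
      then show ?thesis using ij by (metis add_Suc_right less_imp_Suc_add)
    qed
    then obtain i p where ip: "pw s i = pw s (i + Suc p)" by blast
    have "pw s i * pw s (Suc p) = pw s i * pw s 0"
    proof -
      have "pw s i * pw s (Suc p) = pw s (Suc (i + Suc p))" by (simp only: pw_add)
      also have "\<dots> = s * pw s (i + Suc p)" by simp
      also have "\<dots> = s * pw s i" using ip by simp
      also have "\<dots> = pw s (Suc (i + 0))" by simp
      also have "\<dots> = pw s i * pw s 0" by (simp only: pw_add)
      finally show ?thesis .
    qed
    then have all: "\<And>v. v * pw s 0 = v * pw s (Suc p)" using ab_T1[OF ab] by metis
    have "(a*a)*b = (a*a)*(b*pw s p)"
      using all[of a] sab by (simp add: mult.assoc)
    then have "a*b = a*(b*pw s p)" using ab_T1[OF ab] by metis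
    then have sp: "s = pw s (Suc p)" using sab by (simp add: mult.assoc)
    have s2: "s = pw s (Suc (Suc (p + p)))"
    proof -
      have "pw s (Suc (Suc (p + p))) = pw s (Suc (Suc p + p))" by simp
      also have "\<dots> = pw s (Suc p) * pw s p" by (simp only: pw_add)
      also have "\<dots> = s * pw s p" using sp by simp
      also have "\<dots> = pw s (Suc p)" by simp
      finally show ?thesis using sp by simp
    qed
    have "pw s (Suc (Suc (p + p))) = pw s (Suc (1 + (p+p)))" by simp
    also have "\<dots> = pw s 1 * pw s (p+p)" by (simp only: pw_add)
    finally have x: "s = s*s*pw s (p+p)" using s2 by simp
    have "pw s (Suc (Suc (p + p))) = pw s (Suc ((p+p) + 1))" by simp
    also have "\<dots> = pw s (p+p) * pw s 1" by (simp only: pw_add)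
    finally have y: "s = pw s (p+p)*s*s" using s2 by (simp add: mult.assoc)
    show ?thesis using x y by blast
  qed
qed

lemma Hc_comm_group:
  fixes k :: "'a::semigroup_mult"
  assumes L: "\<And>e v y::'a. e*e = e \<Longrightarrow> v*(e*y) = v*y"
    and C: "\<And>g h. g \<in> Hc k \<Longrightarrow> h \<in> Hc k \<Longrightarrow> g*h = h*g"
    and kk: "k*k = k"
  shows "comm_group_on (Hc k)"
  unfolding comm_group_on_def subsemigroup_def
proof (intro conjI ballI)
  fix x y assume "x \<in> Hc k" "y \<in> Hc k"
  then show "x*y \<in> Hc k" using Hc_closed[OF L kk kk] kk by metis
next
  fix x y assume "x \<in> Hc k" "y \<in> Hc k"
  then show "x*y = y*x" using C by blast
next
  show "\<exists>e\<in>Hc k. \<forall>x\<in>Hc k. e * x = x \<and> x * e = x \<and> (\<exists>y\<in>Hc k. x * y = e \<and> y * x = e)"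
  proof (rule bexI[of _ k]; (intro ballI conjI)?)
    show "k \<in> Hc k" using Hc_self kk by blast
  next
    fix x assume x: "x \<in> Hc k"
    then show "k*x = x" "x*k = x" unfolding Hc_def by auto
    from x obtain t where t: "k*t = t" "t*k = t" "x*t = k" "t*x = k" and "k*x = x" "x*k = x"
      unfolding Hc_def by blast
    then have "t \<in> Hc k" unfolding Hc_def by blast
    then show "\<exists>y\<in>Hc k. x * y = k \<and> y * x = k" using t by blast
  qed
qed

lemma forward:
  fixes dummy :: "'a::semigroup_mult"
  assumes ab: "abelian_semigroup TYPE('a)" and cs: "cond_star TYPE('a)"
  shows "(\<exists>B::'a set. inflation_of B \<and> rect_band_comm_groups B) \<and>
     (\<forall>e f::'a. e * e = e \<and> f * f = f \<longrightarrow> (e * f) * (e * f) = e * f)"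
proof -
  define S where "S = {x*y | x y :: 'a. True}"
  have L: "\<And>e v y::'a. e*e = e \<Longrightarrow> v*(e*y) = v*y" using ab_L[OF ab] by blast
  have G: "\<And>s. s \<in> S \<Longrightarrow> \<exists>k. k*k = k \<and> s \<in> Hc k"
    using cs_F1[OF ab cs] Hc_group unfolding S_def by metis
  have F1: "\<And>s. s \<in> S \<Longrightarrow> \<exists>x y. s = s*s*x \<and> s = y*s*s"
    using cs_F1[OF ab cs] unfolding S_def by blast
  have ip: "\<And>i l::'a. i*i = i \<Longrightarrow> l*l = l \<Longrightarrow> (i*l)*(i*l) = i*l"
    by (simp add: mult.assoc L)
  have C: "\<And>k g h::'a. g \<in> Hc k \<Longrightarrow> h \<in> Hc k \<Longrightarrow> g*h = h*g"
  proof -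
    fix k g h :: 'a assume "g \<in> Hc k" "h \<in> Hc k"
    then have "g*k=g" "k*g=g" "h*k=h" "k*h=h" unfolding Hc_def by auto
    then show "g*h = h*g" using ab_comm[OF ab] by blast
  qed
  have CG: "\<And>k::'a. k*k = k \<Longrightarrow> comm_group_on (Hc k)"
  proof -
    fix k :: 'a assume k: "k*k = k"
    show "comm_group_on (Hc k)"
    proof (rule Hc_comm_group)
      show "\<And>e v y::'a. e*e = e \<Longrightarrow> v*(e*y) = v*y" by (rule L)
      show "\<And>g h. g \<in> Hc k \<Longrightarrow> h \<in> Hc k \<Longrightarrow> g*h = h*g" by (rule C)
    qed (rule k)
  qed
  have HS: "\<And>k s::'a. s \<in> Hc k \<Longrightarrow> s \<in> S"
  proof -
    fix k s :: 'a assume "s \<in> Hc k"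
    then have "s = k*s" unfolding Hc_def by auto
    then show "s \<in> S" unfolding S_def by blast
  qed
  have rb: "rect_band_comm_groups S"
    unfolding rect_band_comm_groups_def
  proof (intro exI[of _ "{k::'a. k*k = k}"] exI[of _ "\<lambda>i l. Hc (i*l)"] conjI ballI)
    fix i l :: 'a assume i: "i \<in> {k. k*k = k}" and l: "l \<in> {k. k*k = k}"
    then have il: "(i*l)*(i*l) = i*l" using ip by simp
    show "Hc (i*l) \<noteq> {}" using Hc_self[OF il] by blast
    show "subsemigroup (Hc (i*l))" "comm_group_on (Hc (i*l))"
      using CG[OF il] unfolding comm_group_on_def by auto
  next
    fix i l j m :: 'a assume "i \<in> {k. k*k = k}" "l \<in> {k. k*k = k}" "j \<in> {k. k*k = k}" "m \<in> {k. k*k = k}"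
    show "Hc (i*l) = Hc (j*m) \<or> Hc (i*l) \<inter> Hc (j*m) = {}"
    proof (cases "Hc (i*l) \<inter> Hc (j*m) = {}")
      case False
      then obtain s where "s \<in> Hc (i*l)" "s \<in> Hc (j*m)" by blast
      then have "i*l = j*m" by (rule Hc_unique)
      then show ?thesis by simp
    qed simp
  next
    show "(\<Union>i\<in>{k. k*k = k}. \<Union>l\<in>{k. k*k = k}. Hc (i*l)) = S"
    proof
      show "(\<Union>i\<in>{k. k*k = k}. \<Union>l\<in>{k. k*k = k}. Hc (i*l)) \<subseteq> S" using HS by blast
    next
      show "S \<subseteq> (\<Union>i\<in>{k. k*k = k}. \<Union>l\<in>{k. k*k = k}. Hc (i*l))"
      proof
        fix s assume "s \<in> S"
        then obtain k where "k*k = k" "s \<in> Hc k" using G by blast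
        then show "s \<in> (\<Union>i\<in>{k. k*k = k}. \<Union>l\<in>{k. k*k = k}. Hc (i*l))" by force
      qed
    qed
  next
    fix i l j m x y :: 'a
    assume i: "i \<in> {k. k*k = k}" and l: "l \<in> {k. k*k = k}" and j: "j \<in> {k. k*k = k}"
      and m: "m \<in> {k. k*k = k}" and x: "x \<in> Hc (i*l)" and y: "y \<in> Hc (j*m)"
    have "x*y \<in> Hc ((i*l)*(j*m))" using Hc_closed[OF L _ _ x y] ip i l j m by simp
    moreover have "(i*l)*(j*m) = i*m" using i l j m by (simp add: mult.assoc L)
    ultimately show "x*y \<in> Hc (i*m)" by simp
  qed
  define kk where "kk s = (SOME k. k*k = k \<and> s \<in> Hc k)" for s :: 'a
  have kk: "\<And>s. s \<in> S \<Longrightarrow> kk s * kk s = kk s \<and> s \<in> Hc (kk s)"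
    unfolding kk_def using G by (rule someI_ex)
  define rr where "rr x = x * kk (x*x)" for x :: 'a
  have rS: "\<And>x. rr x \<in> S" unfolding rr_def S_def by blast
  have xxS: "\<And>x. x*x \<in> S" unfolding S_def by blast
  have rb_id: "\<And>b. b \<in> S \<Longrightarrow> rr b = b"
  proof -
    fix b assume b: "b \<in> S"
    then obtain y where y: "b = y*b*b" using F1 by blast
    have "b*b*kk (b*b) = b*b" using kk[OF xxS[of b]] unfolding Hc_def by blast
    then have "y*b*b*kk (b*b) = y*b*b" by (simp add: mult.assoc)
    then show "rr b = b" unfolding rr_def using y by (metis mult.assoc)
  qed
  have rmul: "\<And>x y. x*y = rr x * rr y"
  proof -
    fix x y
    have "y*(y*kk (y*y)) = y*y" using kk[OF xxS[of y]] unfolding Hc_def by (simp add: mult.assoc[symmetric])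
    then have "x*(y*kk (y*y)) = x*y" using ab_T1[OF ab] by metis
    moreover have "rr x * rr y = x*(y*kk (y*y))" unfolding rr_def
      using L kk[OF xxS[of x]] by (simp add: mult.assoc)
    ultimately show "x*y = rr x * rr y" by simp
  qed
  have infl: "inflation_of S"
    unfolding inflation_of_def
  proof (intro conjI exI[of _ "\<lambda>b. {x. rr x = b}"] ballI allI)
    show "subsemigroup S" unfolding subsemigroup_def S_def by blast
  next
    fix b assume "b \<in> S" then show "b \<in> {x. rr x = b}" using rb_id by simp
  next
    fix x show "\<exists>!b. b \<in> S \<and> x \<in> {x. rr x = b}" using rS by auto
  next
    fix a b x y assume "a \<in> S" "b \<in> S" "x \<in> {x. rr x = a}" "y \<in> {x. rr x = b}"
    then show "x*y = a*b" using rmul[of x y] by simp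
  qed
  show ?thesis using infl rb ip by blast
qed

section \<open>Backward direction\<close>

fun fstl :: "'a sterm \<Rightarrow> 'a sterm" where
  "fstl (SMul s t) = fstl s"
| "fstl t = t"

fun lstl :: "'a sterm \<Rightarrow> 'a sterm" where
  "lstl (SMul s t) = lstl t"
| "lstl t = t"

lemma fstl_cases:
  "fstl t = SVar 0 \<or> (\<forall>c u v. seval (c(0:=u)) (fstl t) = seval (c(0:=v)) (fstl (t::'a::semigroup_mult sterm)))"
  by (induction t) auto

lemma lstl_cases:
  "lstl t = SVar 0 \<or> (\<forall>c u v. seval (c(0:=u)) (lstl t) = seval (c(0:=v)) (lstl (t::'a::semigroup_mult sterm)))"
  by (induction t) auto

lemma kappa_leaves:
  fixes \<kappa> :: "'a::semigroup_mult \<Rightarrow> 'a"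
  assumes km: "\<And>a b. \<kappa> (a*b) = \<kappa> a * \<kappa> b" and ki: "\<And>a. \<kappa> a * \<kappa> a = \<kappa> a"
    and L: "\<And>e v y::'a. e*e = e \<Longrightarrow> v*(e*y) = v*y"
  shows "\<kappa> (seval \<rho> t) = \<kappa> (seval \<rho> (fstl t)) * \<kappa> (seval \<rho> (lstl t))"
proof (induction t)
  case (SMul t1 t2)
  have "\<kappa> (seval \<rho> (SMul t1 t2)) = \<kappa> (seval \<rho> t1) * \<kappa> (seval \<rho> t2)" by (simp add: km)
  also have "\<dots> = \<kappa> (seval \<rho> (fstl t1)) * (\<kappa> (seval \<rho> (lstl t1)) * (\<kappa> (seval \<rho> (fstl t2)) * \<kappa> (seval \<rho> (lstl t2))))"
    using SMul by (simp add: mult.assoc)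
  also have "\<dots> = \<kappa> (seval \<rho> (fstl t1)) * \<kappa> (seval \<rho> (lstl t2))"
    using L[OF ki] by simp
  finally show ?case by simp
qed (auto simp: ki)

lemma phi_inv:
  fixes \<phi> :: "'a::semigroup_mult \<Rightarrow> 'a"
  assumes pm: "\<And>a b. \<phi> (a*b) = \<phi> a * \<phi> b" and pG: "\<And>a. \<phi> a \<in> G"
    and C: "\<And>x y. x \<in> G \<Longrightarrow> y \<in> G \<Longrightarrow> x*y = y*x"
  shows "\<phi> (seval (c(0:=u)) t) * \<phi> (seval (d(0:=v)) t) = \<phi> (seval (d(0:=u)) t) * \<phi> (seval (c(0:=v)) t)"
proof (induction t)
  case (SVar n)
  then show ?case using C pG by (cases "n = 0") auto
next
  case (SConst a)
  then show ?case by simp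
next
  case (SMul t1 t2)
  let ?a1 = "\<phi> (seval (c(0:=u)) t1)" and ?a2 = "\<phi> (seval (c(0:=u)) t2)"
  let ?b1 = "\<phi> (seval (d(0:=v)) t1)" and ?b2 = "\<phi> (seval (d(0:=v)) t2)"
  let ?c1 = "\<phi> (seval (d(0:=u)) t1)" and ?c2 = "\<phi> (seval (d(0:=u)) t2)"
  let ?d1 = "\<phi> (seval (c(0:=v)) t1)" and ?d2 = "\<phi> (seval (c(0:=v)) t2)"
  have "\<phi> (seval (c(0:=u)) (SMul t1 t2)) * \<phi> (seval (d(0:=v)) (SMul t1 t2)) = ?a1 * (?a2 * ?b1) * ?b2"
    by (simp add: pm mult.assoc)
  also have "\<dots> = ?a1 * (?b1 * ?a2) * ?b2" using C pG by metis
  also have "\<dots> = (?a1 * ?b1) * (?a2 * ?b2)" by (simp add: mult.assoc)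
  also have "\<dots> = (?c1 * ?d1) * (?c2 * ?d2)" by (simp only: SMul.IH)
  also have "\<dots> = ?c1 * (?d1 * ?c2) * ?d2" by (simp add: mult.assoc)
  also have "\<dots> = ?c1 * (?c2 * ?d1) * ?d2" using C pG by metis
  also have "\<dots> = \<phi> (seval (d(0:=u)) (SMul t1 t2)) * \<phi> (seval (c(0:=v)) (SMul t1 t2))"
    by (simp add: pm mult.assoc)
  finally show ?case .
qed

lemma kappa_step:
  fixes \<kappa> :: "'a::semigroup_mult \<Rightarrow> 'a"
  assumes km: "\<And>a b. \<kappa> (a*b) = \<kappa> a * \<kappa> b" and ki: "\<And>a. \<kappa> a * \<kappa> a = \<kappa> a"
    and L: "\<And>e v y::'a. e*e = e \<Longrightarrow> v*(e*y) = v*y"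
    and h: "\<kappa> (seval (c(0:=u)) t) = \<kappa> (seval (d(0:=u)) t)"
  shows "\<kappa> (seval (c(0:=v)) t) = \<kappa> (seval (d(0:=v)) t)"
proof -
  note kl = kappa_leaves[OF km ki L]
  let ?F = "fstl t" and ?L = "lstl t"
  have h': "\<kappa> (seval (c(0:=u)) ?F) * \<kappa> (seval (c(0:=u)) ?L) =
            \<kappa> (seval (d(0:=u)) ?F) * \<kappa> (seval (d(0:=u)) ?L)" using h kl by metis
  have "\<kappa> (seval (c(0:=v)) ?F) * \<kappa> (seval (c(0:=v)) ?L) =
            \<kappa> (seval (d(0:=v)) ?F) * \<kappa> (seval (d(0:=v)) ?L)"
  proof (cases "?F = SVar 0")
    case F: True
    show ?thesis
    proof (cases "?L = SVar 0")
      case True then show ?thesis using F by simp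
    next
      case False
      then have Li: "\<forall>c u v. seval (c(0:=u)) ?L = seval (c(0:=v)) ?L" using lstl_cases by blast
      let ?lc = "\<kappa> (seval (c(0:=v)) ?L)" and ?ld = "\<kappa> (seval (d(0:=v)) ?L)"
      have h2: "\<kappa> u * ?lc = \<kappa> u * ?ld" using h' F Li by simp metis
      have "\<kappa> v * ?lc = \<kappa> v * (\<kappa> u * ?lc)" using L[OF ki] by simp
      also have "\<dots> = \<kappa> v * ?ld" using h2 L[OF ki] by simp
      finally show ?thesis using F by simp
    qed
  next
    case F: False
    then have Fi: "\<forall>c u v. seval (c(0:=u)) ?F = seval (c(0:=v)) ?F" using fstl_cases by blast
    show ?thesis
    proof (cases "?L = SVar 0")
      case L0: True
      let ?fc = "\<kappa> (seval (c(0:=v)) ?F)" and ?fd = "\<kappa> (seval (d(0:=v)) ?F)"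
      have h2: "?fc * \<kappa> u = ?fd * \<kappa> u" using h' L0 Fi by simp metis
      have "?fc * \<kappa> v = ?fc * (\<kappa> u * \<kappa> v)" using L[OF ki] by simp
      also have "\<dots> = ?fd * (\<kappa> u * \<kappa> v)" using h2 by (simp add: mult.assoc[symmetric])
      also have "\<dots> = ?fd * \<kappa> v" using L[OF ki] by simp
      finally show ?thesis using L0 by simp
    next
      case False
      then have Li: "\<forall>c u v. seval (c(0:=u)) ?L = seval (c(0:=v)) ?L" using lstl_cases by blast
      show ?thesis using h' Fi Li by metis
    qed
  qed
  then show ?thesis using kl by metis
qed

lemma comm_group_props:
  fixes G :: "'a::semigroup_mult set"
  assumes "comm_group_on G"
  shows "\<exists>e\<in>G. e*e = e \<and> (\<forall>x\<in>G. x \<in> Hc e) \<and> (\<forall>g\<in>G. g*g = g \<longrightarrow> g = e)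
           \<and> (\<forall>x\<in>G. \<forall>y\<in>G. x*y = y*x)"
proof -
  from assms obtain e where e: "e \<in> G" and
    ex: "\<forall>x\<in>G. e * x = x \<and> x * e = x \<and> (\<exists>y\<in>G. x * y = e \<and> y * x = e)"
    and C: "\<forall>x\<in>G. \<forall>y\<in>G. x*y = y*x"
    unfolding comm_group_on_def by blast
  have "\<forall>x\<in>G. x \<in> Hc e"
  proof
    fix x assume x: "x \<in> G"
    then obtain y where "y \<in> G" "x*y = e" "y*x = e" using ex by blast
    then show "x \<in> Hc e" unfolding Hc_def using ex x by blast
  qed
  moreover have "\<forall>g\<in>G. g*g = g \<longrightarrow> g = e"
  proof (intro ballI impI)
    fix g assume g: "g \<in> G" "g*g = g"
    then obtain y where "y*g = e" using ex by blast
    then show "g = e" using g ex by (metis mult.assoc)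
  qed
  ultimately show ?thesis using e ex C by blast
qed

lemma backward:
  fixes B :: "'a::semigroup_mult set"
  assumes infl: "inflation_of B" and rb: "rect_band_comm_groups B"
    and idc: "\<forall>e f::'a. e * e = e \<and> f * f = f \<longrightarrow> (e * f) * (e * f) = e * f"
  shows "abelian_semigroup TYPE('a)"
proof -
  from infl obtain X where sB: "subsemigroup B" and X1: "\<forall>b\<in>B. b \<in> X b"
    and X2: "\<forall>x::'a. \<exists>!b. b \<in> B \<and> x \<in> X b"
    and X3: "\<forall>a\<in>B. \<forall>b\<in>B. \<forall>x\<in>X a. \<forall>y\<in>X b. x * y = a * b"
    unfolding inflation_of_def by blast
  define r where "r x = (THE b. b \<in> B \<and> x \<in> X b)" for x :: 'a
  have r1: "\<And>x. r x \<in> B \<and> x \<in> X (r x)"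
  proof -
    fix x :: 'a
    show "r x \<in> B \<and> x \<in> X (r x)" unfolding r_def
      by (rule theI'[of "\<lambda>b. b \<in> B \<and> x \<in> X b"]) (rule X2[rule_format])
  qed
  have r2: "\<And>b. b \<in> B \<Longrightarrow> r b = b"
  proof -
    fix b :: 'a assume b: "b \<in> B"
    show "r b = b" unfolding r_def
      by (rule the1_equality[of "\<lambda>c. c \<in> B \<and> b \<in> X c"]) (use X2 X1 b in auto)
  qed
  have rm: "\<And>x y. x*y = r x * r y"
  proof -
    fix x y :: 'a
    show "x*y = r x * r y" using X3[rule_format, of "r x" "r y" x y] r1[of x] r1[of y] by blast
  qed
  have mB: "\<And>x y. x*y \<in> B"
  proof -
    fix x y :: 'a
    have "r x * r y \<in> B" using r1 sB unfolding subsemigroup_def by blast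
    then show "x*y \<in> B" using rm[of x y] by simp
  qed
  from rb obtain I L and T :: "'a \<Rightarrow> 'a \<Rightarrow> 'a set" where
    T1: "\<forall>i\<in>I. \<forall>l\<in>L. T i l \<noteq> {} \<and> subsemigroup (T i l) \<and> comm_group_on (T i l)"
    and T3: "(\<Union>i\<in>I. \<Union>l\<in>L. T i l) = B"
    and T4: "\<forall>i\<in>I. \<forall>l\<in>L. \<forall>j\<in>I. \<forall>m\<in>L. \<forall>x\<in>T i l. \<forall>y\<in>T j m. x * y \<in> T i m"
    unfolding rect_band_comm_groups_def by blast
  have blk: "\<And>b. b \<in> B \<Longrightarrow> \<exists>i\<in>I. \<exists>l\<in>L. b \<in> T i l" using T3 by blast
  have cg: "\<And>i l. i \<in> I \<Longrightarrow> l \<in> L \<Longrightarrow> \<exists>e\<in>T i l. e*e = e \<and> (\<forall>x\<in>T i l. x \<in> Hc e)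
       \<and> (\<forall>g\<in>T i l. g*g = g \<longrightarrow> g = e) \<and> (\<forall>x\<in>T i l. \<forall>y\<in>T i l. x*y = y*x)"
    using T1 comm_group_props by blast
  have idB: "\<And>f::'a. f*f = f \<Longrightarrow> f \<in> B"
  proof -
    fix f :: 'a assume "f*f = f" then show "f \<in> B" using mB[of f f] by simp
  qed
  have LB: "\<And>b1 b2 f. b1 \<in> B \<Longrightarrow> b2 \<in> B \<Longrightarrow> f*f = f \<Longrightarrow> b1*(f*b2) = b1*b2"
  proof -
    fix b1 b2 f :: 'a assume b1: "b1 \<in> B" and b2: "b2 \<in> B" and ff: "f*f = f"
    obtain i l where il: "i \<in> I" "l \<in> L" "b1 \<in> T i l" using blk b1 by blast
    obtain p q where pq: "p \<in> I" "q \<in> L" "b2 \<in> T p q" using blk b2 by blast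
    obtain j m where jm: "j \<in> I" "m \<in> L" "f \<in> T j m" using blk idB[OF ff] by blast
    obtain e1 where e1: "e1 \<in> T i l" "e1*e1 = e1" "b1 \<in> Hc e1" using cg[OF il(1,2)] il(3) by blast
    obtain e2 where e2: "e2 \<in> T p q" "e2*e2 = e2" "b2 \<in> Hc e2" using cg[OF pq(1,2)] pq(3) by blast
    obtain e3 where e3: "\<forall>g\<in>T i q. g*g = g \<longrightarrow> g = e3" using cg[OF il(1) pq(2)] by blast
    have "e1*f \<in> T i m" using T4 il jm e1 by blast
    then have a: "e1*f*e2 \<in> T i q" using T4 il jm pq e2 by blast
    have "(e1*f)*(e1*f) = e1*f" using idc e1 ff by blast
    then have ai: "(e1*f*e2)*(e1*f*e2) = e1*f*e2" using idc e2 by blast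
    have b: "e1*e2 \<in> T i q" using T4 il pq e1 e2 by blast
    have bi: "(e1*e2)*(e1*e2) = e1*e2" using idc e1 e2 by blast
    have eqa: "e1*f*e2 = e3" using e3 a ai by blast
    have eqb: "e1*e2 = e3" using e3 b bi by blast
    have eqs: "b1*e1 = b1" "e2*b2 = b2" using e1 e2 unfolding Hc_def by auto
    have "b1*(f*b2) = (b1*e1)*(f*(e2*b2))" using eqs by simp
    also have "\<dots> = b1*(e1*f*e2)*b2" by (simp add: mult.assoc)
    also have "\<dots> = b1*(e1*e2)*b2" using eqa eqb by simp
    also have "\<dots> = (b1*e1)*(e2*b2)" by (simp add: mult.assoc)
    also have "\<dots> = b1*b2" using eqs by simp
    finally show "b1*(f*b2) = b1*b2" .
  qed
  have LA: "\<And>e v y::'a. e*e = e \<Longrightarrow> v*(e*y) = v*y"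
  proof -
    fix e v y :: 'a assume ee: "e*e = e"
    have "v*(e*y) = r v * (e*y)" using rm[of v "e*y"] r2[OF mB[of e y]] by simp
    also have "\<dots> = r v * (e * r y)" using rm[of e y] r2[OF idB[OF ee]] by simp
    also have "\<dots> = r v * r y" using LB r1 ee by blast
    finally show "v*(e*y) = v*y" using rm by simp
  qed
  have BH: "\<And>b. b \<in> B \<Longrightarrow> \<exists>k. k*k = k \<and> b \<in> Hc k"
    using blk cg by metis
  have HC: "\<And>k g h::'a. k*k = k \<Longrightarrow> g \<in> Hc k \<Longrightarrow> h \<in> Hc k \<Longrightarrow> g*h = h*g"
  proof -
    fix k g h :: 'a assume kk: "k*k = k" and g: "g \<in> Hc k" and h: "h \<in> Hc k"
    obtain i l where il: "i \<in> I" "l \<in> L" "k \<in> T i l" using blk idB[OF kk] by blast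
    have inT: "\<And>x. x \<in> Hc k \<Longrightarrow> x \<in> T i l"
    proof -
      fix x assume x: "x \<in> Hc k"
      then have xk: "x = k*x*k" unfolding Hc_def by (auto simp: mult.assoc)
      then have "x \<in> B" using mB[of "k*x" k] by simp
      then obtain j m where jm: "j \<in> I" "m \<in> L" "x \<in> T j m" using blk by blast
      have "k*x \<in> T i m" using T4 il jm by blast
      then have "k*x*k \<in> T i l" using T4 il jm by blast
      then show "x \<in> T i l" using xk by simp
    qed
    show "g*h = h*g" using cg[OF il(1,2)] inT g h by blast
  qed
  define kk where "kk b = (SOME k. k*k = k \<and> b \<in> Hc k)" for b :: 'a
  have kk1: "\<And>b. b \<in> B \<Longrightarrow> kk b * kk b = kk b \<and> b \<in> Hc (kk b)"
    unfolding kk_def using BH by (rule someI_ex)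
  define \<kappa> where "\<kappa> a = kk (r a)" for a :: 'a
  have ki: "\<And>a. \<kappa> a * \<kappa> a = \<kappa> a" unfolding \<kappa>_def using kk1 r1 by blast
  have kH: "\<And>a. r a \<in> Hc (\<kappa> a)" unfolding \<kappa>_def using kk1 r1 by blast
  have km: "\<And>a b. \<kappa> (a*b) = \<kappa> a * \<kappa> b"
  proof -
    fix a b :: 'a
    have "r (a*b) = r a * r b" using r2[OF mB[of a b]] rm[of a b] by simp
    then have "r (a*b) \<in> Hc (\<kappa> a * \<kappa> b)" using Hc_closed[OF LA ki ki kH kH] by simp
    then show "\<kappa> (a*b) = \<kappa> a * \<kappa> b" using kH Hc_unique by blast
  qed
  obtain e :: 'a where ee: "e*e = e" using ki by blast
  have eB: "e \<in> B" using idB[OF ee] .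
  define \<phi> where "\<phi> a = e*a*e" for a :: 'a
  have pH: "\<And>a. \<phi> a \<in> Hc e"
  proof -
    fix a :: 'a
    have "e*a = e * r a" using rm[of e a] r2[OF eB] by simp
    then have "\<phi> a = e * r a * e" unfolding \<phi>_def by simp
    moreover have "e * r a * e \<in> Hc (e * \<kappa> a * e)"
    proof -
      have 1: "e * r a \<in> Hc (e * \<kappa> a)" by (rule Hc_closed[OF LA ee ki Hc_self[OF ee] kH])
      have 2: "(e * \<kappa> a)*(e * \<kappa> a) = e * \<kappa> a" using LA[OF ee] ki by (simp add: mult.assoc)
      show ?thesis by (rule Hc_closed[OF LA 2 ee 1 Hc_self[OF ee]])
    qed
    moreover have "e * \<kappa> a * e = e" using LA[OF ki] ee by (simp add: mult.assoc)
    ultimately show "\<phi> a \<in> Hc e" by simp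
  qed
  have pm: "\<And>a b. \<phi> (a*b) = \<phi> a * \<phi> b"
    unfolding \<phi>_def using LA[OF ee] ee by (simp add: mult.assoc)
  have Ce: "\<And>x y. x \<in> Hc e \<Longrightarrow> y \<in> Hc e \<Longrightarrow> x*y = y*x" using HC[OF ee] by blast
  have recon: "\<And>P. P \<in> B \<Longrightarrow> P = \<kappa> P * \<phi> P * \<kappa> P"
  proof -
    fix P assume P: "P \<in> B"
    then have "P \<in> Hc (\<kappa> P)" using kH[of P] r2[OF P] by simp
    then have "\<kappa> P * P = P" "P * \<kappa> P = P" unfolding Hc_def by auto
    then show "P = \<kappa> P * \<phi> P * \<kappa> P" unfolding \<phi>_def using LA[OF ee] by (simp add: mult.assoc)
  qed
  show ?thesis unfolding abelian_semigroup_def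
  proof (intro allI impI)
    fix t :: "'a sterm" and u v :: 'a and c d :: "nat \<Rightarrow> 'a"
    assume h: "seval (c(0 := u)) t = seval (d(0 := u)) t"
    show "seval (c(0 := v)) t = seval (d(0 := v)) t"
    proof (cases t)
      case (SVar n)
      then show ?thesis using h by (cases "n = 0") auto
    next
      case (SConst a)
      then show ?thesis by simp
    next
      case (SMul t1 t2)
      have k: "\<kappa> (seval (c(0:=v)) t) = \<kappa> (seval (d(0:=v)) t)"
        by (rule kappa_step[OF km ki LA arg_cong[where f=\<kappa>, OF h]])
      have inv: "\<phi> (seval (c(0:=u)) t) * \<phi> (seval (d(0:=v)) t) = \<phi> (seval (d(0:=u)) t) * \<phi> (seval (c(0:=v)) t)"
        by (rule phi_inv[OF pm pH Ce])
      have p: "\<phi> (seval (d(0:=v)) t) = \<phi> (seval (c(0:=v)) t)"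
      proof -
        let ?g = "\<phi> (seval (d(0:=u)) t)"
        obtain s where s: "s*?g = e" using pH unfolding Hc_def by blast
        have "?g * \<phi> (seval (d(0:=v)) t) = ?g * \<phi> (seval (c(0:=v)) t)" using inv h by simp
        then have "s*?g * \<phi> (seval (d(0:=v)) t) = s*?g * \<phi> (seval (c(0:=v)) t)" by (simp add: mult.assoc)
        moreover have "e * \<phi> (seval (d(0:=v)) t) = \<phi> (seval (d(0:=v)) t)"
          "e * \<phi> (seval (c(0:=v)) t) = \<phi> (seval (c(0:=v)) t)"
          using pH unfolding Hc_def by blast+
        ultimately show ?thesis using s by simp
      qed
      have B1: "seval (c(0:=v)) t \<in> B" using SMul mB by simp
      have B2: "seval (d(0:=v)) t \<in> B" using SMul mB by simp
      show ?thesis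
        apply (subst recon[OF B1])
        apply (subst recon[OF B2])
        using k p by simp
    qed
  qed
qed

theorem mainTheorem15:
  assumes "cond_star TYPE('a::semigroup_mult)"
  shows "abelian_semigroup TYPE('a) \<longleftrightarrow>
    ((\<exists>B::'a set. inflation_of B \<and> rect_band_comm_groups B) \<and>
     (\<forall>e f::'a. e * e = e \<and> f * f = f \<longrightarrow> (e * f) * (e * f) = e * f))"
proof
  assume "abelian_semigroup TYPE('a)"
  then show "(\<exists>B::'a set. inflation_of B \<and> rect_band_comm_groups B) \<and>
     (\<forall>e f::'a. e * e = e \<and> f * f = f \<longrightarrow> (e * f) * (e * f) = e * f)"
    using forward[OF _ assms] by blast
next
  assume R: "(\<exists>B::'a set. inflation_of B \<and> rect_band_comm_groups B) \<and>
     (\<forall>e f::'a. e * e = e \<and> f * f = f \<longrightarrow> (e * f) * (e * f) = e * f)"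
  then obtain B :: "'a set" where "inflation_of B" "rect_band_comm_groups B" by blast
  moreover have "\<forall>e f::'a. e * e = e \<and> f * f = f \<longrightarrow> (e * f) * (e * f) = e * f" using R by blast
  ultimately show "abelian_semigroup TYPE('a)" by (rule backward)
qed

end
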